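(* Consider the Gaussian crossed effect model with $K=2$, $L=1$ and balanced levels, and suppose that the number of edges of $G_{\boldsymbol{Q}}$ is at least $c_1N$ and at most $c_2 N$ for constants $0<c_1\le c_2$. Then for every ordering of the $M=p+1$ scalar variables in $\boldsymbol{\theta}$, $\mathrm{Cost(SLA)}\ge c\,N\bar n$, where $c>0$ depends only on $c_1$.
   Context: Model: observations $y_j\sim\mathcal{N}(a^{(0)}+a^{(1)}_{i_1[j]}+a^{(2)}_{i_2[j]},\tau^{-1})$, $j=1,\dots,N$, with $a^{(k)}_i\sim\mathcal{N}(0,\tau_k^{-1})$ for $i=1,\dots,I_k$, $k=1,2$, and $a^{(0)}\sim\mathcal{N}(\mu_{pr},T_{pr}^{-1})$; $\boldsymbol{\theta}=(a^{(0)},\boldsymbol{a}^{(1)},\boldsymbol{a}^{(2)})$ has $M=1+p$ entries, $p=I_1+I_2$. Counts $n^{(k)}_i=\#\{j: i_k[j]=i\}$, $n^{(1,2)}_{ij}=\#\{n: i_1[n]=i,i_2[n]=j\}$. The posterior precision $\boldsymbol{Q}$ has entries $\boldsymbol{Q}[a^{(0)},a^{(0)}]=T_{pr}+N\tau$, $\boldsymbol{Q}[a^{(0)},a^{(k)}_i]=n^{(k)}_i\tau$, $\boldsymbol{Q}[a^{(k)}_i,a^{(k)}_i]=\tau_k+n^{(k)}_i\tau$, $\boldsymbol{Q}[a^{(1)}_i,a^{(2)}_j]=n^{(1,2)}_{ij}\tau$, and all other entries zero. $G_{\boldsymbol{Q}}$ is the graph on the variables with an edge iff the corresponding off-diagonal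 entry of $\boldsymbol{Q}$ is nonzero. Balanced levels: $n^{(k)}_i=N/I_k$ for all $k,i$. $\bar n=2N/p$. $\mathrm{Cost(SLA)}$ is the number of floating point operations to compute the Cholesky factor of $\boldsymbol{Q}$ (in the given ordering) by the column recursion $L_{mm}^2=Q_{mm}-\sum_{\ell<m}L_{m\ell}^2$, $L_{jm}=(Q_{jm}-\sum_{\ell<m}L_{j\ell}L_{m\ell})/L_{mm}$ ($j>m$), computing only entries in the potential nonzero pattern (entries $(j,m)$, $j\ge m$, such that $j=m$ or some path from $m$ to $j$ in $G_{\boldsymbol{Q}}$ has all intermediate vertices preceding $m$) and skipping operations with structurally zero entries. *)

theory Defs
  imports Complex_Main
begin

text \<open>Scalar variables of theta: the global intercept a0, the level effects a1_i (i < I1)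
  and a2_i (i < I2). Levels are indexed from 0.\<close>
datatype var = A0 | A1 nat | A2 nat

definition vars :: "nat \<Rightarrow> nat \<Rightarrow> var set" where
  "vars I1 I2 = {A0} \<union> A1 ` {..<I1} \<union> A2 ` {..<I2}"

text \<open>Observations j < N with level assignments i1 j, i2 j.\<close>
definition cnt1 :: "nat \<Rightarrow> (nat \<Rightarrow> nat) \<Rightarrow> nat \<Rightarrow> nat" where
  "cnt1 N i1 i = card {j. j < N \<and> i1 j = i}"

definition cnt12 :: "nat \<Rightarrow> (nat \<Rightarrow> nat) \<Rightarrow> (nat \<Rightarrow> nat) \<Rightarrow> nat \<Rightarrow> nat \<Rightarrow> nat" where
  "cnt12 N i1 i2 i i' = card {j. j < N \<and> i1 j = i \<and> i2 j = i'}"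

fun precQ :: "nat \<Rightarrow> (nat \<Rightarrow> nat) \<Rightarrow> (nat \<Rightarrow> nat) \<Rightarrow> real \<Rightarrow> real \<Rightarrow> real \<Rightarrow> real
              \<Rightarrow> var \<Rightarrow> var \<Rightarrow> real" where
  "precQ N i1 i2 tau tau1 tau2 Tpr A0 A0 = Tpr + real N * tau"
| "precQ N i1 i2 tau tau1 tau2 Tpr A0 (A1 i) = real (cnt1 N i1 i) * tau"
| "precQ N i1 i2 tau tau1 tau2 Tpr A0 (A2 i) = real (cnt1 N i2 i) * tau"
| "precQ N i1 i2 tau tau1 tau2 Tpr (A1 i) A0 = real (cnt1 N i1 i) * tau"
| "precQ N i1 i2 tau tau1 tau2 Tpr (A2 i) A0 = real (cnt1 N i2 i) * tau"
| "precQ N i1 i2 tau tau1 tau2 Tpr (A1 i) (A1 i') =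
     (if i = i' then tau1 + real (cnt1 N i1 i) * tau else 0)"
| "precQ N i1 i2 tau tau1 tau2 Tpr (A2 i) (A2 i') =
     (if i = i' then tau2 + real (cnt1 N i2 i) * tau else 0)"
| "precQ N i1 i2 tau tau1 tau2 Tpr (A1 i) (A2 i') = real (cnt12 N i1 i2 i i') * tau"
| "precQ N i1 i2 tau tau1 tau2 Tpr (A2 i') (A1 i) = real (cnt12 N i1 i2 i i') * tau"

definition num_edges :: "var set \<Rightarrow> (var \<Rightarrow> var \<Rightarrow> real) \<Rightarrow> nat" where
  "num_edges V Q = card {{u, v} | u v. u \<in> V \<and> v \<in> V \<and> u \<noteq> v \<and> Q u v \<noteq> 0}"

definition adjpos :: "var list \<Rightarrow> (var \<Rightarrow> var \<Rightarrow> real) \<Rightarrow> nat \<Rightarrow> nat \<Rightarrow> bool" where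
  "adjpos xs Q a b \<longleftrightarrow> a < length xs \<and> b < length xs \<and> a \<noteq> b \<and> Q (xs ! a) (xs ! b) \<noteq> 0"

text \<open>Potential nonzero pattern of the Cholesky factor: (j, m) with j \<ge> m such that j = m or
  some path from m to j in G_Q has all intermediate vertices preceding m.\<close>
definition fillpat :: "var list \<Rightarrow> (var \<Rightarrow> var \<Rightarrow> real) \<Rightarrow> nat \<Rightarrow> nat \<Rightarrow> bool" where
  "fillpat xs Q j m \<longleftrightarrow> m \<le> j \<and> j < length xs \<and>
     (j = m \<or> (\<exists>ps. (\<forall>q \<in> set ps. q < m) \<and> successively (adjpos xs Q) (m # ps @ [j])))"

text \<open>Flop count of the column Cholesky recursion restricted to the pattern:
  diagonal entry m: one multiply and one subtract per l < m with L_ml in the pattern, plus a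
  square root; off-diagonal entry (j,m): one multiply and one subtract per l < m with both
  L_jl and L_ml in the pattern, plus a division.\<close>
definition cost_SLA :: "var list \<Rightarrow> (var \<Rightarrow> var \<Rightarrow> real) \<Rightarrow> nat" where
  "cost_SLA xs Q = (\<Sum>m < length xs.
       (1 + 2 * card {l. l < m \<and> fillpat xs Q m l})
     + (\<Sum>j \<in> {j. m < j \<and> fillpat xs Q j m}.
          1 + 2 * card {l. l < m \<and> fillpat xs Q j l \<and> fillpat xs Q m l}))"

end

theory Submission
  imports Defs "HOL-Analysis.Convex"
begin

lemma precQ_sym: "precQ N i1 i2 t t1 t2 T u v = precQ N i1 i2 t t1 t2 T v u"
  by (cases u; cases v) auto

definition Dset :: "var list \<Rightarrow> (var \<Rightarrow> var \<Rightarrow> real) \<Rightarrow> nat \<Rightarrow> nat set" where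
  "Dset xs Q l = {j. l < j \<and> adjpos xs Q l j}"

lemma Dset_sub: "Dset xs Q l \<subseteq> {..<length xs}"
  by (auto simp: Dset_def adjpos_def)

lemma pairs_card:
  fixes S :: "nat set"
  assumes "finite S"
  shows "2 * card {(m,j). m\<in>S \<and> j\<in>S \<and> m<j} + card S = card S * card S"
proof -
  define A where "A = {(m,j). m\<in>S \<and> j\<in>S \<and> m<j}"
  define B where "B = {(m,j). m\<in>S \<and> j\<in>S \<and> j<m}"
  define C where "C = {(m,j). m\<in>S \<and> j\<in>S \<and> m=j}"
  have fS: "finite (S \<times> S)" using assms by simp
  have SS: "S \<times> S = (A \<union> B) \<union> C" by (auto simp: A_def B_def C_def)
  have fA: "finite A" "finite B" "finite C"
    by (rule finite_subset[OF _ fS], auto simp: A_def B_def C_def)+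
  have "B = prod.swap ` A" by (auto simp: A_def B_def image_iff)
  hence cB: "card B = card A" by (simp add: card_image)
  have "C = (\<lambda>x. (x,x)) ` S" by (auto simp: C_def)
  hence cC: "card C = card S" by (simp add: card_image inj_on_def)
  have "card (S \<times> S) = card (A \<union> B) + card C"
    unfolding SS by (rule card_Un_disjoint) (use fA in \<open>auto simp: A_def B_def C_def\<close>)
  also have "card (A \<union> B) = card A + card B"
    by (rule card_Un_disjoint) (use fA in \<open>auto simp: A_def B_def\<close>)
  finally have "card (S \<times> S) = card A + card B + card C" by simp
  moreover have "card (S \<times> S) = card S * card S" by (rule card_cartesian_product)
  ultimately have "2 * card A + card S = card S * card S" using cB cC by linarith
  thus ?thesis unfolding A_def .
qed

lemma fill_lt: "fillpat xs Q j m \<Longrightarrow> j < length xs"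
  unfolding fillpat_def by (elim conjE)

lemma cost_lower:
  assumes sym: "\<And>u v. Q u v = Q v u"
  shows "(\<Sum>l<length xs. card (Dset xs Q l) * card (Dset xs Q l)) \<le> cost_SLA xs Q"
proof -
  define n where "n = length xs"
  define F where "F m = {j. m < j \<and> fillpat xs Q j m}" for m
  define X where "X m j = {l. l < m \<and> fillpat xs Q j l \<and> fillpat xs Q m l}" for m j
  define P where "P l = {(m,j). m \<in> Dset xs Q l \<and> j \<in> Dset xs Q l \<and> m<j}" for l
  have adjsym: "adjpos xs Q a b \<Longrightarrow> adjpos xs Q b a" for a b
    by (auto simp: adjpos_def sym)
  have fF: "finite (F m)" for m
  proof (rule finite_subset[of _ "{..<n}"])
    show "F m \<subseteq> {..<n}" unfolding F_def n_def using fill_lt by blast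
  qed simp
  have fX: "finite (X m j)" for m j
  proof (rule finite_subset[of _ "{..<m}"])
    show "X m j \<subseteq> {..<m}" unfolding X_def by blast
  qed simp
  have fD: "finite (Dset xs Q l)" for l
    by (rule finite_subset[OF Dset_sub]) simp
  have fP: "finite (P l)" for l
  proof (rule finite_subset[of _ "Dset xs Q l \<times> Dset xs Q l"])
    show "P l \<subseteq> Dset xs Q l \<times> Dset xs Q l" unfolding P_def by blast
  qed (simp add: fD)
  have fill1: "adjpos xs Q a b \<Longrightarrow> a < b \<Longrightarrow> fillpat xs Q b a" for a b
    unfolding fillpat_def
    by (rule conjI, simp, rule conjI, simp add: adjpos_def, rule disjI2, rule exI[of _ "[]"]) simp
  have a: "card (Dset xs Q m) \<le> card (F m)" for m
    by (rule card_mono[OF fF]) (auto simp: Dset_def F_def fill1)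
  have b: "(\<Sum>l<n. card (P l)) \<le> (\<Sum>m<n. \<Sum>j\<in>F m. card (X m j))"
  proof -
    have e1: "(\<Sum>l<n. card (P l)) = card (Sigma {..<n} P)"
      by (simp add: card_SigmaI fP)
    have e2: "(\<Sum>m<n. \<Sum>j\<in>F m. card (X m j)) = card (Sigma {..<n} (\<lambda>m. Sigma (F m) (X m)))"
      by (simp add: card_SigmaI fF fX finite_SigmaI)
    define f where "f = (\<lambda>(l::nat,(m::nat,j::nat)). (m,(j,l)))"
    have inj: "inj_on f (Sigma {..<n} P)" by (auto simp: inj_on_def f_def)
    have sub: "f ` Sigma {..<n} P \<subseteq> Sigma {..<n} (\<lambda>m. Sigma (F m) (X m))"
    proof
      fix t assume "t \<in> f ` Sigma {..<n} P"
      then obtain l m j where t: "t = (m,(j,l))" and l: "l < n" and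
        m: "m \<in> Dset xs Q l" and j: "j \<in> Dset xs Q l" and mj: "m < j"
        by (auto simp: f_def P_def)
      have lm: "l < m" "adjpos xs Q l m" using m by (auto simp: Dset_def)
      have lj: "l < j" "adjpos xs Q l j" using j by (auto simp: Dset_def)
      have mn: "m < n" "j < n" using lm lj by (auto simp: adjpos_def n_def)
      have "fillpat xs Q j m"
        unfolding fillpat_def
        using mj mn lm lj adjsym[OF lm(2)]
        by (intro conjI disjI2 exI[of _ "[l]"]) (auto simp: n_def)
      moreover have "fillpat xs Q j l" "fillpat xs Q m l"
        using fill1 lm lj by auto
      ultimately show "t \<in> Sigma {..<n} (\<lambda>m. Sigma (F m) (X m))"
        using t mn mj lm by (auto simp: F_def X_def)
    qed
    have "card (Sigma {..<n} P) \<le> card (Sigma {..<n} (\<lambda>m. Sigma (F m) (X m)))"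
      by (rule card_inj_on_le[OF inj sub]) (simp add: fF fX finite_SigmaI)
    thus ?thesis using e1 e2 by simp
  qed
  have "(\<Sum>l<n. card (Dset xs Q l) * card (Dset xs Q l))
      = (\<Sum>l<n. 2 * card (P l) + card (Dset xs Q l))"
    by (rule sum.cong) (simp_all add: P_def pairs_card[OF fD])
  also have "\<dots> = 2 * (\<Sum>l<n. card (P l)) + (\<Sum>l<n. card (Dset xs Q l))"
    by (simp add: sum.distrib sum_distrib_left)
  also have "\<dots> \<le> 2 * (\<Sum>m<n. \<Sum>j\<in>F m. card (X m j)) + (\<Sum>m<n. card (F m))"
    using b a by (intro add_mono sum_mono) auto
  also have "\<dots> = (\<Sum>m<n. card (F m) + (\<Sum>j\<in>F m. 2 * card (X m j)))"
    by (simp add: sum.distrib sum_distrib_left)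
  also have "\<dots> = (\<Sum>m<n. \<Sum>j\<in>F m. 1 + 2 * card (X m j))"
  proof (rule sum.cong)
    fix m show "card (F m) + (\<Sum>j\<in>F m. 2 * card (X m j)) = (\<Sum>j\<in>F m. 1 + 2 * card (X m j))"
      by (simp only: sum.distrib card_eq_sum)
  qed simp
  also have "\<dots> \<le> cost_SLA xs Q"
    unfolding cost_SLA_def F_def X_def n_def by (intro sum_mono) simp
  finally show ?thesis by (simp add: n_def)
qed

lemma edges_le:
  assumes sym: "\<And>u v. Q u v = Q v u" and V: "set xs = V"
  shows "num_edges V Q \<le> (\<Sum>l<length xs. card (Dset xs Q l))"
proof -
  define E where "E = {{u, v} | u v. u \<in> V \<and> v \<in> V \<and> u \<noteq> v \<and> Q u v \<noteq> 0}"
  have fD: "finite (Dset xs Q l)" for l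
    by (rule finite_subset[OF Dset_sub]) simp
  have sub: "E \<subseteq> (\<lambda>(a,b). {xs!a, xs!b}) ` Sigma {..<length xs} (Dset xs Q)"
  proof
    fix e assume "e \<in> E"
    then obtain u v where e: "e = {u,v}" and uv: "u \<in> V" "v \<in> V" "u \<noteq> v" "Q u v \<noteq> 0"
      by (auto simp: E_def)
    obtain a where a: "a < length xs" "xs!a = u" using uv V by (metis in_set_conv_nth)
    obtain b where b: "b < length xs" "xs!b = v" using uv V by (metis in_set_conv_nth)
    have ab: "a \<noteq> b" using a b uv by auto
    show "e \<in> (\<lambda>(a,b). {xs!a, xs!b}) ` Sigma {..<length xs} (Dset xs Q)"
    proof (cases "a < b")
      case True
      hence "(a,b) \<in> Sigma {..<length xs} (Dset xs Q)"
        using a b ab uv by (auto simp: Dset_def adjpos_def)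
      thus ?thesis using e a b by force
    next
      case False
      hence "(b,a) \<in> Sigma {..<length xs} (Dset xs Q)"
        using a b ab uv sym[of u v] by (auto simp: Dset_def adjpos_def)
      thus ?thesis using e a b by force
    qed
  qed
  have "num_edges V Q = card E" by (simp add: num_edges_def E_def)
  also have "\<dots> \<le> card ((\<lambda>(a,b). {xs!a, xs!b}) ` Sigma {..<length xs} (Dset xs Q))"
    by (rule card_mono[OF _ sub]) (simp add: fD)
  also have "\<dots> \<le> card (Sigma {..<length xs} (Dset xs Q))" by (rule card_image_le) (simp add: fD)
  also have "\<dots> = (\<Sum>l<length xs. card (Dset xs Q l))" by (simp add: card_SigmaI fD)
  finally show ?thesis .
qed

lemma cs:
  fixes d :: "nat \<Rightarrow> real"
  shows "(\<Sum>l<n. d l)\<^sup>2 \<le> real n * (\<Sum>l<n. (d l)\<^sup>2)"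
  using Cauchy_Schwarz_ineq_sum[of d "\<lambda>_. 1" "{..<n}"] by (simp add: mult.commute)

lemma card_vars: "card (vars I1 I2) \<le> 1 + I1 + I2"
proof -
  have "card (vars I1 I2) \<le> card ({A0} \<union> A1 ` {..<I1}) + card (A2 ` {..<I2})"
    unfolding vars_def by (rule card_Un_le)
  also have "\<dots> \<le> 1 + card (A1 ` {..<I1}) + card (A2 ` {..<I2})"
    using card_Un_le[of "{A0}" "A1 ` {..<I1}"] by simp
  also have "\<dots> \<le> 1 + I1 + I2"
    using card_image_le[of "{..<I1}" A1] card_image_le[of "{..<I2}" A2] by simp
  finally show ?thesis .
qed

theorem proposition2:
  fixes c1 :: real
  assumes "0 < c1"
  shows "\<exists>c > 0. \<forall>(c2::real) (N::nat) (I1::nat) (I2::nat) (i1::nat \<Rightarrow> nat) (i2::nat \<Rightarrow> nat)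
            (tau::real) (tau1::real) (tau2::real) (Tpr::real) (xs::var list).
     c1 \<le> c2 \<and> 0 < I1 \<and> 0 < I2 \<and>
     (\<forall>j < N. i1 j < I1 \<and> i2 j < I2) \<and>
     (\<forall>i < I1. real (cnt1 N i1 i) = real N / real I1) \<and>
     (\<forall>i < I2. real (cnt1 N i2 i) = real N / real I2) \<and>
     0 < tau \<and> 0 < tau1 \<and> 0 < tau2 \<and> 0 < Tpr \<and>
     c1 * real N \<le> real (num_edges (vars I1 I2) (precQ N i1 i2 tau tau1 tau2 Tpr)) \<and>
     real (num_edges (vars I1 I2) (precQ N i1 i2 tau tau1 tau2 Tpr)) \<le> c2 * real N \<and>
     distinct xs \<and> set xs = vars I1 I2
     \<longrightarrow> c * real N * (2 * real N / real (I1 + I2))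
           \<le> real (cost_SLA xs (precQ N i1 i2 tau tau1 tau2 Tpr))"
proof (intro exI[of _ "c1^2/4"] conjI allI impI)
  show "0 < c1^2/4" using assms by simp
next
  fix c2 :: real and N I1 I2 :: nat and i1 i2 :: "nat \<Rightarrow> nat" and tau tau1 tau2 Tpr :: real
    and xs :: "var list"
  assume H: "c1 \<le> c2 \<and> 0 < I1 \<and> 0 < I2 \<and>
     (\<forall>j < N. i1 j < I1 \<and> i2 j < I2) \<and>
     (\<forall>i < I1. real (cnt1 N i1 i) = real N / real I1) \<and>
     (\<forall>i < I2. real (cnt1 N i2 i) = real N / real I2) \<and>
     0 < tau \<and> 0 < tau1 \<and> 0 < tau2 \<and> 0 < Tpr \<and>
     c1 * real N \<le> real (num_edges (vars I1 I2) (precQ N i1 i2 tau tau1 tau2 Tpr)) \<and>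
     real (num_edges (vars I1 I2) (precQ N i1 i2 tau tau1 tau2 Tpr)) \<le> c2 * real N \<and>
     distinct xs \<and> set xs = vars I1 I2"
  define Q where "Q = precQ N i1 i2 tau tau1 tau2 Tpr"
  have sym: "\<And>u v. Q u v = Q v u" unfolding Q_def by (rule precQ_sym)
  define n where "n = length xs"
  define d where "d l = real (card (Dset xs Q l))" for l
  define p where "p = real (I1 + I2)"
  have I10: "0 < I1" using H by (elim conjE) assumption
  have p0: "p > 0" using I10 by (simp add: p_def)
  have dx: "distinct xs" using H by (elim conjE) assumption
  have sx: "set xs = vars I1 I2" using H by (elim conjE) assumption
  have nle: "real n \<le> 2 * p"
  proof -
    have "n = card (set xs)" using dx by (simp add: n_def distinct_card)
    also have "\<dots> \<le> 1 + I1 + I2" using sx card_vars by simp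
    finally show ?thesis using I10 by (simp add: p_def)
  qed
  have E1: "c1 * real N \<le> (\<Sum>l<n. d l)"
  proof -
    have "num_edges (vars I1 I2) Q \<le> (\<Sum>l<n. card (Dset xs Q l))"
      using edges_le[where Q=Q, OF sym sx] n_def by blast
    hence "real (num_edges (vars I1 I2) Q) \<le> (\<Sum>l<n. d l)"
      unfolding d_def by (metis of_nat_le_iff of_nat_sum)
    moreover have "c1 * real N \<le> real (num_edges (vars I1 I2) Q)"
      using H unfolding Q_def by (elim conjE) assumption
    ultimately show ?thesis by linarith
  qed
  have C1: "(\<Sum>l<n. (d l)\<^sup>2) \<le> real (cost_SLA xs Q)"
  proof -
    have "(\<Sum>l<n. card (Dset xs Q l) * card (Dset xs Q l)) \<le> cost_SLA xs Q"
      using cost_lower[where Q=Q and xs=xs, OF sym] n_def by simp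
    hence "real (\<Sum>l<n. card (Dset xs Q l) * card (Dset xs Q l)) \<le> real (cost_SLA xs Q)"
      by linarith
    thus ?thesis by (simp add: d_def power2_eq_square)
  qed
  have c1N: "0 \<le> c1 * real N" using assms by simp
  have "(c1 * real N)\<^sup>2 \<le> (\<Sum>l<n. d l)\<^sup>2"
    using E1 c1N by (simp add: power_mono)
  also have "\<dots> \<le> real n * (\<Sum>l<n. (d l)\<^sup>2)" by (rule cs)
  also have "\<dots> \<le> 2 * p * real (cost_SLA xs Q)"
    by (rule mult_mono[OF nle C1]) (use p0 in \<open>auto simp: sum_nonneg\<close>)
  finally have K: "(c1 * real N)\<^sup>2 \<le> 2 * p * real (cost_SLA xs Q)" .
  have "c1\<^sup>2 / 4 * real N * (2 * real N / p) = (c1 * real N)\<^sup>2 / (2 * p)"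
    using p0 by (simp add: field_simps power2_eq_square)
  also have "\<dots> \<le> real (cost_SLA xs Q)"
    using K p0 by (simp add: divide_le_eq mult.commute)
  finally have F: "c1\<^sup>2 / 4 * real N * (2 * real N / p) \<le> real (cost_SLA xs Q)" .
  show "c1\<^sup>2 / 4 * real N * (2 * real N / real (I1 + I2))
           \<le> real (cost_SLA xs (precQ N i1 i2 tau tau1 tau2 Tpr))"
    using F by (simp only: p_def Q_def)
qed

end
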